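(* Let $\sigma\in\mathcal T$ be an admissible type. For any $0\le r_1<r_2$ there is $\alpha\in\mathbb Q_+$ such that $\rho_{\mathrm{Id}}(r_1)\le(\alpha\cdot\sigma)(1,0)\le\omega_{\mathrm{Id}}(r_2)$.
   Context: Standing setting: $(X,\|\cdot\|)$ is a separable infinite-dimensional Banach space and $d$ is a translation-invariant stable pseudometric on $X$ such that $\mathrm{Id}\colon(X,\|\cdot\|)\to(X,d)$ is a coarse equivalence, with $\omega_{\mathrm{Id}}(t)=\sup\{d(x,y):\|x-y\|\le t\}$, $\rho_{\mathrm{Id}}(t)=\inf\{d(x,y):\|x-y\|\ge t\}$. $\Delta$ is a countable $\|\cdot\|$-dense $\mathbb Q$-linear subspace; $\bar x(\lambda,y)=d(\lambda x,y)$; $\mathcal T$ is the pointwise closure of $\{\bar x:x\in\Delta\}$ in $\mathbb R^{\mathbb Q\times\Delta}$; a defining sequence for $\sigma$ is $(x_n)\subseteq\Delta$ with $\bar x_n\to\sigma$. Dilation: for $\alpha\in\mathbb Q$, $\alpha\cdot\sigma=\lim_n\overline{\alpha x_n}$ for any defining sequence $(x_n)$ of $\sigma$; equivalently $(\alpha\cdot\sigma)(\lambda,x)=\sigma(\lambda\alpha,x)$. With $\gamma=\inf_{t>0}\omega_{\mathrm{Id}}(t)$, a type $\sigma$ is admissible if $\sigma(1,0)>\gamma$. *)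

theory Defs
  imports "HOL-Analysis.Analysis"
begin

definition pseudometric :: "('a \<Rightarrow> 'a \<Rightarrow> real) \<Rightarrow> bool" where
  "pseudometric d \<longleftrightarrow> (\<forall>x. d x x = 0) \<and> (\<forall>x y. 0 \<le> d x y) \<and> (\<forall>x y. d x y = d y x)
     \<and> (\<forall>x y z. d x z \<le> d x y + d y z)"

definition translation_invariant :: "('a::ab_group_add \<Rightarrow> 'a \<Rightarrow> real) \<Rightarrow> bool" where
  "translation_invariant d \<longleftrightarrow> (\<forall>x y z. d (x + z) (y + z) = d x y)"

definition stable_pm :: "('a \<Rightarrow> 'a \<Rightarrow> real) \<Rightarrow> bool" where
  "stable_pm d \<longleftrightarrow> (\<forall>(u::nat \<Rightarrow> 'a) (v::nat \<Rightarrow> 'a) a b.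
      (\<exists>z R. \<forall>n. d (u n) z \<le> R \<and> d (v n) z \<le> R) \<longrightarrow>
      (\<lambda>n. lim (\<lambda>m. d (u n) (v m))) \<longlonglongrightarrow> a \<longrightarrow>
      (\<forall>n. convergent (\<lambda>m. d (u n) (v m))) \<longrightarrow>
      (\<lambda>m. lim (\<lambda>n. d (u n) (v m))) \<longlonglongrightarrow> b \<longrightarrow>
      (\<forall>m. convergent (\<lambda>n. d (u n) (v m))) \<longrightarrow> a = b)"

definition id_coarse_equivalence :: "('a::real_normed_vector \<Rightarrow> 'a \<Rightarrow> real) \<Rightarrow> bool" where
  "id_coarse_equivalence d \<longleftrightarrow>
     (\<forall>t. \<exists>C. \<forall>x y. norm (x - y) \<le> t \<longrightarrow> d x y \<le> C) \<and>
     (\<forall>s. \<exists>C. \<forall>x y. d x y \<le> s \<longrightarrow> norm (x - y) \<le> C)"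

definition omega_Id :: "('a::real_normed_vector \<Rightarrow> 'a \<Rightarrow> real) \<Rightarrow> real \<Rightarrow> real" where
  "omega_Id d t = Sup {d x y | x y. norm (x - y) \<le> t}"

definition rho_Id :: "('a::real_normed_vector \<Rightarrow> 'a \<Rightarrow> real) \<Rightarrow> real \<Rightarrow> real" where
  "rho_Id d t = Inf {d x y | x y. norm (x - y) \<ge> t}"

definition gamma_Id :: "('a::real_normed_vector \<Rightarrow> 'a \<Rightarrow> real) \<Rightarrow> real" where
  "gamma_Id d = Inf (omega_Id d ` {0<..})"

definition Q_dense_subspace :: "'a::real_normed_vector set \<Rightarrow> bool" where
  "Q_dense_subspace D \<longleftrightarrow> countable D \<and> closure D = UNIV \<and> 0 \<in> D \<and>
     (\<forall>x\<in>D. \<forall>y\<in>D. x + y \<in> D) \<and> (\<forall>q::rat. \<forall>x\<in>D. of_rat q *\<^sub>R x \<in> D)"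

text \<open>bar x (lambda, y) = d (lambda x) y, as a function on Q x X (only its values
  on Q x Delta are relevant).\<close>
definition bar :: "('a::real_normed_vector \<Rightarrow> 'a \<Rightarrow> real) \<Rightarrow> 'a \<Rightarrow> rat \<Rightarrow> 'a \<Rightarrow> real" where
  "bar d x = (\<lambda>l y. d (of_rat l *\<^sub>R x) y)"

definition defining_seq ::
  "('a::real_normed_vector \<Rightarrow> 'a \<Rightarrow> real) \<Rightarrow> 'a set \<Rightarrow> (nat \<Rightarrow> 'a) \<Rightarrow> (rat \<Rightarrow> 'a \<Rightarrow> real) \<Rightarrow> bool" where
  "defining_seq d D x \<sigma> \<longleftrightarrow> range x \<subseteq> D \<and>
     (\<forall>l. \<forall>y\<in>D. (\<lambda>n. bar d (x n) l y) \<longlonglongrightarrow> \<sigma> l y)"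

text \<open>Membership in the pointwise closure T of {bar x : x in Delta} in R^(Q x Delta);
  since Q x Delta is countable this product is metrizable, so closure = sequential closure.\<close>
definition is_type ::
  "('a::real_normed_vector \<Rightarrow> 'a \<Rightarrow> real) \<Rightarrow> 'a set \<Rightarrow> (rat \<Rightarrow> 'a \<Rightarrow> real) \<Rightarrow> bool" where
  "is_type d D \<sigma> \<longleftrightarrow> (\<exists>x. defining_seq d D x \<sigma>)"

definition dilation :: "rat \<Rightarrow> (rat \<Rightarrow> 'a \<Rightarrow> real) \<Rightarrow> rat \<Rightarrow> 'a \<Rightarrow> real" where
  "dilation \<alpha> \<sigma> = (\<lambda>l y. \<sigma> (l * \<alpha>) y)"

definition admissible :: "('a::real_normed_vector \<Rightarrow> 'a \<Rightarrow> real) \<Rightarrow> (rat \<Rightarrow> 'a \<Rightarrow> real) \<Rightarrow> bool" where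
  "admissible d \<sigma> \<longleftrightarrow> \<sigma> 1 0 > gamma_Id d"

end

theory Submission
  imports Defs
begin

lemma omega_bound:
  fixes d :: "'a::real_normed_vector \<Rightarrow> 'a \<Rightarrow> real"
  assumes ce: "id_coarse_equivalence d" and "norm (x - y) \<le> t"
  shows "d x y \<le> omega_Id d t"
proof -
  obtain C where C: "\<forall>x y. norm (x - y) \<le> t \<longrightarrow> d x y \<le> C"
    using ce unfolding id_coarse_equivalence_def by blast
  have "bdd_above {d x y | x y. norm (x - y) \<le> t}"
    using C by (auto intro!: bdd_aboveI)
  moreover have "d x y \<in> {d x y | x y. norm (x - y) \<le> t}" using assms(2) by blast
  ultimately show ?thesis unfolding omega_Id_def by (rule cSup_upper[rotated])
qed

lemma rho_bound:
  fixes d :: "'a::real_normed_vector \<Rightarrow> 'a \<Rightarrow> real"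
  assumes pm: "pseudometric d" and "norm (x - y) \<ge> t"
  shows "rho_Id d t \<le> d x y"
proof -
  have "bdd_below {d x y | x y. norm (x - y) \<ge> t}"
    using pm unfolding pseudometric_def by (auto intro!: bdd_belowI[where m=0])
  moreover have "d x y \<in> {d x y | x y. norm (x - y) \<ge> t}" using assms(2) by blast
  ultimately show ?thesis unfolding rho_Id_def by (rule cInf_lower[rotated])
qed

theorem lemma5p2:
  fixes d :: "'a::banach \<Rightarrow> 'a \<Rightarrow> real"
    and D :: "'a set"
    and \<sigma> :: "rat \<Rightarrow> 'a \<Rightarrow> real"
    and r1 r2 :: real
  assumes separable: "\<exists>C::'a set. countable C \<and> closure C = UNIV"
    and inf_dim: "\<forall>B::'a set. finite B \<longrightarrow> span B \<noteq> UNIV"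
    and pm: "pseudometric d"
    and ti: "translation_invariant d"
    and st: "stable_pm d"
    and ce: "id_coarse_equivalence d"
    and DD: "Q_dense_subspace D"
    and ty: "is_type d D \<sigma>"
    and adm: "admissible d \<sigma>"
    and r: "0 \<le> r1" "r1 < r2"
  shows "\<exists>\<alpha>::rat. \<alpha> > 0 \<and> rho_Id d r1 \<le> dilation \<alpha> \<sigma> 1 0
           \<and> dilation \<alpha> \<sigma> 1 0 \<le> omega_Id d r2"
proof -
  obtain x where ds: "defining_seq d D x \<sigma>" using ty unfolding is_type_def by blast
  have D0: "0 \<in> D" using DD unfolding Q_dense_subspace_def by blast
  have conv: "\<And>a. (\<lambda>n. d (of_rat a *\<^sub>R x n) 0) \<longlonglongrightarrow> \<sigma> a 0"
    using ds D0 unfolding defining_seq_def bar_def by blast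
  from conv[of 1] have conv1: "(\<lambda>n. d (x n) 0) \<longlonglongrightarrow> \<sigma> 1 0" by simp
  obtain K where K: "\<And>n. norm (d (x n) 0) \<le> K"
    using convergent_imp_Bseq[OF convergentI[OF conv1]] unfolding Bseq_def by (auto intro: less_imp_le)
  obtain C where C: "\<forall>u v. d u v \<le> K \<longrightarrow> norm (u - v) \<le> C"
    using ce unfolding id_coarse_equivalence_def by blast
  have nb: "\<And>n. norm (x n) \<in> {0..C}"
  proof -
    fix n
    have "d (x n) 0 \<le> K" using K[of n] by (simp add: abs_le_iff)
    hence "norm (x n - 0) \<le> C" using C by blast
    thus "norm (x n) \<in> {0..C}" by simp
  qed
  have "seq_compact {0..C::real}" by (rule compact_imp_seq_compact) simp
  hence "\<exists>l\<in>{0..C}. \<exists>r. strict_mono r \<and> ((\<lambda>n. norm (x n)) \<circ> r) \<longlonglongrightarrow> l"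
    unfolding seq_compact_def using nb by (metis (no_types, lifting))
  then obtain L r where L: "L \<in> {0..C}" and sm: "strict_mono r"
    and lim: "((\<lambda>n. norm (x n)) \<circ> r) \<longlonglongrightarrow> L"
    by blast
  have conv1r: "(\<lambda>n. d (x (r n)) 0) \<longlonglongrightarrow> \<sigma> 1 0"
    using LIMSEQ_subseq_LIMSEQ[OF conv1 sm] by (simp add: o_def)
  have Lpos: "L > 0"
  proof (rule ccontr)
    assume "\<not> L > 0"
    with L have L0: "L = 0" by auto
    have "\<sigma> 1 0 \<le> gamma_Id d"
      unfolding gamma_Id_def
    proof (rule cInf_greatest)
      show "omega_Id d ` {0<..} \<noteq> {}" by auto
    next
      fix w assume "w \<in> omega_Id d ` {0<..}"
      then obtain t where t: "t > 0" "w = omega_Id d t" by auto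
      have "eventually (\<lambda>n. norm (x (r n)) < t) sequentially"
        using order_tendstoD(2)[OF lim, of t] t(1) L0 by (simp add: o_def)
      then have "eventually (\<lambda>n. d (x (r n)) 0 \<le> w) sequentially"
        by eventually_elim (use omega_bound[OF ce] t in \<open>auto\<close>)
      then show "\<sigma> 1 0 \<le> w" using tendsto_upperbound[OF conv1r] by simp
    qed
    with adm show False unfolding admissible_def by simp
  qed
  have "r1 / L < r2 / L" using Lpos r by (simp add: divide_strict_right_mono)
  then obtain q where q: "r1 / L < of_rat q" "of_rat q < r2 / L" using of_rat_dense by blast
  have qpos: "0 < real_of_rat q" using q(1) r(1) Lpos
  proof -
    have "0 \<le> r1 / L" using r(1) Lpos by simp
    thus ?thesis using q(1) by linarith
  qed
  hence qp: "q > 0" by simp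
  have qL: "r1 < of_rat q * L" "of_rat q * L < r2"
    using q Lpos by (simp_all add: pos_divide_less_eq pos_less_divide_eq mult.commute)
  have lim2: "(\<lambda>n. norm (of_rat q *\<^sub>R x (r n))) \<longlonglongrightarrow> of_rat q * L"
    using tendsto_mult_left[OF lim, of "of_rat q"] qpos by (simp add: o_def)
  have ev1: "eventually (\<lambda>n. r1 < norm (of_rat q *\<^sub>R x (r n))) sequentially"
    using order_tendstoD(1)[OF lim2 qL(1)] .
  have ev2: "eventually (\<lambda>n. norm (of_rat q *\<^sub>R x (r n)) < r2) sequentially"
    using order_tendstoD(2)[OF lim2 qL(2)] .
  have convq: "(\<lambda>n. d (of_rat q *\<^sub>R x (r n)) 0) \<longlonglongrightarrow> \<sigma> q 0"
    using LIMSEQ_subseq_LIMSEQ[OF conv[of q] sm] by (simp add: o_def)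
  have "rho_Id d r1 \<le> \<sigma> q 0"
  proof (rule tendsto_lowerbound[OF convq _ sequentially_bot])
    show "eventually (\<lambda>n. rho_Id d r1 \<le> d (of_rat q *\<^sub>R x (r n)) 0) sequentially"
      using ev1 by eventually_elim (rule rho_bound[OF pm], simp)
  qed
  moreover have "\<sigma> q 0 \<le> omega_Id d r2"
  proof (rule tendsto_upperbound[OF convq _ sequentially_bot])
    show "eventually (\<lambda>n. d (of_rat q *\<^sub>R x (r n)) 0 \<le> omega_Id d r2) sequentially"
      using ev2 by eventually_elim (rule omega_bound[OF ce], simp)
  qed
  ultimately show ?thesis using qp unfolding dilation_def by auto
qed

end
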